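(* For each of the following groups $G$ of order $24$ there exists a $(G,[1^3,2^2,17],12)$ Hadamard partitioned difference family: (a) $C_3\rtimes C_8=\langle a,b \mid a^8=b^3=1,\ ab^{-1}=ba\rangle$; (b) $SL(2,3)$, the group of $2\times 2$ matrices over $\mathbb{Z}_3$ of determinant $1$; (c) $\mathbb{Z}_3\times D_8$.
   Context: For a finite group $G$ (written additively, or multiplicatively in which case the difference of $x$ and $y$ is $xy^{-1}$), and $B\subseteq G$, $\Delta B$ is the multiset of differences of ordered pairs of distinct elements of $B$; for $\mathcal{F}=\{B_1,\dots,B_t\}$, $\Delta\mathcal{F}$ is the multiset union of the $\Delta B_i$. $\mathcal{F}$ is a $(G,[k_1,\dots,k_t],\lambda)$ partitioned difference family if the $B_i$ partition $G$, $|B_i|=k_i$, and $\Delta\mathcal{F}$ contains every non-identity element of $G$ exactly $\lambda$ times; it is Hadamard if $|G|=2\lambda$. Exponents in $[1^3,2^2,17]$ denote multiplicities (three blocks of size 1, two of size 2, one of size 17). $D_{2n}=\langle x,y\mid x^n=1,\ y^2=1,\ yx^i=x^{-i}y\rangle$ is the dihedral group of order $2n$, so $D_8$ has order $8$. *)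

theory Defs
  imports "HOL-Algebra.Group"
begin

definition diff_count :: "('a, 'b) monoid_scheme \<Rightarrow> 'a set \<Rightarrow> 'a \<Rightarrow> nat" where
  "diff_count G B g = card {(x, y). x \<in> B \<and> y \<in> B \<and> x \<noteq> y \<and> x \<otimes>\<^bsub>G\<^esub> inv\<^bsub>G\<^esub> y = g}"

definition is_PDF :: "('a, 'b) monoid_scheme \<Rightarrow> 'a set list \<Rightarrow> nat list \<Rightarrow> nat \<Rightarrow> bool" where
  "is_PDF G F ks lam \<longleftrightarrow>
     length F = length ks \<and>
     (\<forall>i < length F. F ! i \<subseteq> carrier G \<and> F ! i \<noteq> {} \<and> finite (F ! i) \<and> card (F ! i) = ks ! i) \<and>
     (\<forall>i < length F. \<forall>j < length F. i \<noteq> j \<longrightarrow> F ! i \<inter> F ! j = {}) \<and>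
     \<Union> (set F) = carrier G \<and>
     (\<forall>g \<in> carrier G. g \<noteq> \<one>\<^bsub>G\<^esub> \<longrightarrow> (\<Sum>i < length F. diff_count G (F ! i) g) = lam)"

definition is_Hadamard_PDF :: "('a, 'b) monoid_scheme \<Rightarrow> 'a set list \<Rightarrow> nat list \<Rightarrow> nat \<Rightarrow> bool" where
  "is_Hadamard_PDF G F ks lam \<longleftrightarrow> is_PDF G F ks lam \<and> finite (carrier G) \<and> card (carrier G) = 2 * lam"

text \<open>C_3 \<rtimes> C_8 = <a,b | a^8 = b^3 = 1, a b^-1 = b a>: the pair (j,i) stands for b^j a^i;
  a b a^-1 = b^-1, so (b^j a^i)(b^l a^k) = b^(j + (-1)^i l) a^(i+k).\<close>
definition C3_sd_C8 :: "(nat \<times> nat) monoid" where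
  "C3_sd_C8 = \<lparr>carrier = {0..<3} \<times> {0..<8},
     mult = (\<lambda>(j, i) (l, k). ((j + (if even i then l else 2 * l)) mod 3, (i + k) mod 8)),
     one = (0, 0)\<rparr>"

definition SL23 :: "((int \<times> int) \<times> (int \<times> int)) monoid" where
  "SL23 = \<lparr>carrier = {((a, b), (c, d)). a \<in> {0..2} \<and> b \<in> {0..2} \<and> c \<in> {0..2} \<and> d \<in> {0..2}
                                        \<and> (a * d - b * c) mod 3 = 1},
     mult = (\<lambda>((a, b), (c, d)) ((e, f), (g, h)).
               (((a * e + b * g) mod 3, (a * f + b * h) mod 3),
                ((c * e + d * g) mod 3, (c * f + d * h) mod 3))),
     one = ((1, 0), (0, 1))\<rparr>"

text \<open>Z_3 \<times> D_8, D_8 = <x,y | x^4 = 1, y^2 = 1, y x^i = x^-i y>: the triple (t,i,e) stands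
  for (t, x^i y^e); (x^i y^e)(x^k y^f) = x^(i + (-1)^e k) y^(e+f).\<close>
definition Z3_x_D8 :: "(nat \<times> nat \<times> nat) monoid" where
  "Z3_x_D8 = \<lparr>carrier = {0..<3} \<times> {0..<4} \<times> {0..<2},
     mult = (\<lambda>(t, i, e) (s, k, f).
               ((t + s) mod 3, (i + (if e = 0 then k else 3 * k)) mod 4, (e + f) mod 2)),
     one = (0, 0, 0)\<rparr>"

end

theory Submission
  imports Defs
begin

definition dl :: "('a,'b) monoid_scheme \<Rightarrow> ('a \<Rightarrow> 'a) \<Rightarrow> 'a list \<Rightarrow> 'a list" where
  "dl G f xs = map (\<lambda>(x,y). mult G x (f y)) (filter (\<lambda>(x,y). x \<noteq> y) (List.product xs xs))"

lemma inv_eq: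
  assumes "y \<in> carrier G" "z \<in> carrier G" "mult G y z = one G" "mult G z y = one G"
    "\<forall>w\<in>carrier G. mult G y w = one G \<longrightarrow> w = z"
  shows "inv\<^bsub>G\<^esub> y = z"
  unfolding m_inv_def
proof (rule the_equality)
  show "z \<in> carrier G \<and> y \<otimes>\<^bsub>G\<^esub> z = \<one>\<^bsub>G\<^esub> \<and> z \<otimes>\<^bsub>G\<^esub> y = \<one>\<^bsub>G\<^esub>"
    using assms(2,3,4) by blast
next
  fix w assume "w \<in> carrier G \<and> y \<otimes>\<^bsub>G\<^esub> w = \<one>\<^bsub>G\<^esub> \<and> w \<otimes>\<^bsub>G\<^esub> y = \<one>\<^bsub>G\<^esub>"
  then show "w = z" using assms(5) by blast
qed

lemma count_list_map: "count_list (map h L) g = length (filter (\<lambda>p. h p = g) L)"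
  by (induction L) auto

lemma dl_count:
  assumes "distinct xs" "\<forall>y\<in>set xs. inv\<^bsub>G\<^esub> y = f y"
  shows "diff_count G (set xs) g = count_list (dl G f xs) g"
proof -
  let ?L = "filter (\<lambda>(x,y). x \<noteq> y \<and> mult G x (f y) = g) (List.product xs xs)"
  have "{(x, y). x \<in> set xs \<and> y \<in> set xs \<and> x \<noteq> y \<and> x \<otimes>\<^bsub>G\<^esub> inv\<^bsub>G\<^esub> y = g} = set ?L"
    using assms(2) by auto
  moreover have "distinct ?L"
    using assms(1) by (simp add: distinct_product)
  moreover have "card (set ?L) = length ?L" using \<open>distinct ?L\<close> by (rule distinct_card)
  ultimately have "diff_count G (set xs) g = length ?L"
    unfolding diff_count_def by (simp only:)
  also have "\<dots> = count_list (dl G f xs) g"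
    unfolding dl_def count_list_map filter_filter
    by (intro arg_cong[where f=length] filter_cong) auto
  finally show ?thesis .
qed

definition check_inv :: "('a,'b) monoid_scheme \<Rightarrow> 'a list \<Rightarrow> ('a \<Rightarrow> 'a) \<Rightarrow> bool" where
  "check_inv G cs f \<longleftrightarrow> list_all (\<lambda>y. f y \<in> set cs \<and> mult G y (f y) = one G \<and> mult G (f y) y = one G \<and>
          list_all (\<lambda>w. mult G y w = one G \<longrightarrow> w = f y) cs) cs"

definition cnt_ok :: "'a list \<Rightarrow> 'a list \<Rightarrow> 'a \<Rightarrow> nat \<Rightarrow> bool" where
  "cnt_ok D cs e lam \<longleftrightarrow> list_all (\<lambda>g. g = e \<or> count_list D g = lam) cs"

definition check_cnt :: "('a,'b) monoid_scheme \<Rightarrow> 'a list \<Rightarrow> ('a \<Rightarrow> 'a) \<Rightarrow> 'a list list \<Rightarrow> nat \<Rightarrow> bool" where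
  "check_cnt G cs f Fl lam \<longleftrightarrow> cnt_ok (concat (map (dl G f) Fl)) cs (one G) lam"

lemma count_list_concat: "count_list (concat Ls) g = sum_list (map (\<lambda>xs. count_list xs g) Ls)"
  by (induction Ls) (auto simp: count_list_append)

definition check_struct :: "'a list \<Rightarrow> 'a list list \<Rightarrow> nat list \<Rightarrow> nat \<Rightarrow> bool" where
  "check_struct cs Fl ks lam \<longleftrightarrow>
     length Fl = length ks \<and> list_all distinct Fl \<and> map length Fl = ks \<and> list_all (\<lambda>xs. xs \<noteq> []) Fl \<and>
     list_all (\<lambda>xs. list_all (\<lambda>x. x \<in> set cs) xs) Fl \<and>
     distinct (concat Fl) \<and> list_all (\<lambda>x. x \<in> set (concat Fl)) cs \<and>
     distinct cs \<and> length cs = 2 * lam"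

definition check :: "('a,'b) monoid_scheme \<Rightarrow> 'a list \<Rightarrow> ('a \<Rightarrow> 'a) \<Rightarrow> 'a list list \<Rightarrow> nat list \<Rightarrow> nat \<Rightarrow> bool" where
  "check G cs f Fl ks lam \<longleftrightarrow> check_struct cs Fl ks lam \<and> check_inv G cs f \<and> check_cnt G cs f Fl lam"

lemma check_sound:
  assumes c: "set cs = carrier G" and ch: "check G cs f Fl ks lam"
  shows "is_Hadamard_PDF G (map set Fl) ks lam"
proof -
  have C: "length Fl = length ks" "list_all distinct Fl" "map length Fl = ks" "list_all (\<lambda>xs. xs \<noteq> []) Fl"
     "list_all (\<lambda>xs. list_all (\<lambda>x. x \<in> set cs) xs) Fl"
     "distinct (concat Fl)" "list_all (\<lambda>x. x \<in> set (concat Fl)) cs"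
     "list_all (\<lambda>y. f y \<in> set cs \<and> mult G y (f y) = one G \<and> mult G (f y) y = one G \<and>
          list_all (\<lambda>w. mult G y w = one G \<longrightarrow> w = f y) cs) cs"
     "list_all (\<lambda>g. g = one G \<or> sum_list (map (\<lambda>xs. count_list (dl G f xs) g) Fl) = lam) cs"
     "distinct cs" "length cs = 2 * lam"
    using ch unfolding check_def check_inv_def check_cnt_def check_struct_def cnt_ok_def count_list_concat
    by (auto simp: comp_def)
  have inv: "\<forall>y\<in>carrier G. inv\<^bsub>G\<^esub> y = f y"
    using C(8) c by (auto simp: list_all_iff intro!: inv_eq)
  have sub: "\<forall>xs\<in>set Fl. set xs \<subseteq> carrier G"
    using C(5) c by (auto simp: list_all_iff)
  have dc: "diff_count G (set xs) g = count_list (dl G f xs) g" if "xs \<in> set Fl" for xs g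
    using that sub C(2) inv by (intro dl_count) (auto simp: list_all_iff)
  have P1: "\<forall>i < length (map set Fl). map set Fl ! i \<subseteq> carrier G \<and> map set Fl ! i \<noteq> {} \<and> finite (map set Fl ! i) \<and> card (map set Fl ! i) = ks ! i"
    using sub C(2,3,4) by (auto simp: list_all_iff distinct_card)
  have dF: "distinct Fl" and dj: "\<And>ys zs. ys \<in> set Fl \<Longrightarrow> zs \<in> set Fl \<Longrightarrow> ys \<noteq> zs \<Longrightarrow> set ys \<inter> set zs = {}"
    using C(6) C(4) unfolding distinct_concat_iff list_all_iff
    by (auto simp: removeAll_id)
  have P2: "\<forall>i < length (map set Fl). \<forall>j < length (map set Fl). i \<noteq> j \<longrightarrow> map set Fl ! i \<inter> map set Fl ! j = {}"
    using dF dj by (auto simp: nth_eq_iff_index_eq)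
  have P3: "\<Union> (set (map set Fl)) = carrier G"
    using C(7) sub c by (auto simp: list_all_iff)
  have P4: "\<forall>g \<in> carrier G. g \<noteq> \<one>\<^bsub>G\<^esub> \<longrightarrow> (\<Sum>i < length (map set Fl). diff_count G (map set Fl ! i) g) = lam"
  proof (intro ballI impI)
    fix g assume "g \<in> carrier G" "g \<noteq> \<one>\<^bsub>G\<^esub>"
    then have "sum_list (map (\<lambda>xs. count_list (dl G f xs) g) Fl) = lam"
      using C(9) c by (auto simp: list_all_iff)
    also have "sum_list (map (\<lambda>xs. count_list (dl G f xs) g) Fl) = sum_list (map (\<lambda>xs. diff_count G (set xs) g) Fl)"
      using dc by (intro arg_cong[where f=sum_list] map_cong) auto
    also have "\<dots> = (\<Sum>i < length Fl. diff_count G (set (Fl ! i)) g)"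
      by (simp add: sum_list_sum_nth atLeast0LessThan)
    finally show "(\<Sum>i < length (map set Fl). diff_count G (map set Fl ! i) g) = lam" by simp
  qed
  have "finite (carrier G)" using c by (metis finite_set)
  have "card (carrier G) = 2 * lam"
    using c C(10,11) by (metis distinct_card)
  then show ?thesis
  proof -
    have "is_PDF G (map set Fl) ks lam"
      unfolding is_PDF_def 
      using P1 P2 P3 P4 C(1) by (simp only: length_map simp_thms)
    then show ?thesis unfolding is_Hadamard_PDF_def using \<open>finite (carrier G)\<close> \<open>card (carrier G) = 2 * lam\<close> by blast
  qed
qed


definition cs_C3_sd_C8 :: "(nat \<times> nat) list" where "cs_C3_sd_C8 = [(0, 0), (0, 1), (0, 2), (0, 3), (0, 4), (0, 5), (0, 6), (0, 7), (1, 0), (1, 1), (1, 2), (1, 3), (1, 4), (1, 5), (1, 6), (1, 7), (2, 0), (2, 1), (2, 2), (2, 3), (2, 4), (2, 5), (2, 6), (2, 7)]"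
definition Fl_C3_sd_C8 :: "(nat \<times> nat) list list" where "Fl_C3_sd_C8 = [[(0, 0)], [(0, 2)], [(0, 4)], [(0, 1), (2, 2)], [(1, 0), (1, 5)], [(0, 3), (0, 5), (0, 6), (0, 7), (1, 1), (1, 2), (1, 3), (1, 4), (1, 6), (1, 7), (2, 0), (2, 1), (2, 3), (2, 4), (2, 5), (2, 6), (2, 7)]]"
definition cs_SL23 :: "((int \<times> int) \<times> (int \<times> int)) list" where "cs_SL23 = [((0, 1), (2, 0)), ((0, 1), (2, 1)), ((0, 1), (2, 2)), ((0, 2), (1, 0)), ((0, 2), (1, 1)), ((0, 2), (1, 2)), ((1, 0), (0, 1)), ((1, 0), (1, 1)), ((1, 0), (2, 1)), ((1, 1), (0, 1)), ((1, 1), (1, 2)), ((1, 1), (2, 0)), ((1, 2), (0, 1)), ((1, 2), (1, 0)), ((1, 2), (2, 2)), ((2, 0), (0, 2)), ((2, 0), (1, 2)), ((2, 0), (2, 2)), ((2, 1), (0, 2)), ((2, 1), (1, 1)), ((2, 1), (2, 0)), ((2, 2), (0, 2)), ((2, 2), (1, 0)), ((2, 2), (2, 1))]"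
definition Fl_SL23 :: "((int \<times> int) \<times> (int \<times> int)) list list" where "Fl_SL23 = [[((0, 1), (2, 0))], [((0, 2), (1, 0))], [((2, 1), (1, 1))], [((0, 1), (2, 1)), ((1, 0), (1, 1))], [((2, 0), (1, 2)), ((2, 1), (2, 0))], [((0, 1), (2, 2)), ((0, 2), (1, 1)), ((0, 2), (1, 2)), ((1, 0), (0, 1)), ((1, 0), (2, 1)), ((1, 1), (0, 1)), ((1, 1), (1, 2)), ((1, 1), (2, 0)), ((1, 2), (0, 1)), ((1, 2), (1, 0)), ((1, 2), (2, 2)), ((2, 0), (0, 2)), ((2, 0), (2, 2)), ((2, 1), (0, 2)), ((2, 2), (0, 2)), ((2, 2), (1, 0)), ((2, 2), (2, 1))]]"
definition cs_Z3_x_D8 :: "(nat \<times> nat \<times> nat) list" where "cs_Z3_x_D8 = [(0, 0, 0), (0, 0, 1), (0, 1, 0), (0, 1, 1), (0, 2, 0), (0, 2, 1), (0, 3, 0), (0, 3, 1), (1, 0, 0), (1, 0, 1), (1, 1, 0), (1, 1, 1), (1, 2, 0), (1, 2, 1), (1, 3, 0), (1, 3, 1), (2, 0, 0), (2, 0, 1), (2, 1, 0), (2, 1, 1), (2, 2, 0), (2, 2, 1), (2, 3, 0), (2, 3, 1)]"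
definition Fl_Z3_x_D8 :: "(nat \<times> nat \<times> nat) list list" where "Fl_Z3_x_D8 = [[(0, 0, 0)], [(0, 2, 0)], [(1, 0, 0)], [(0, 0, 1), (2, 1, 0)], [(0, 1, 0), (2, 2, 1)], [(0, 1, 1), (0, 2, 1), (0, 3, 0), (0, 3, 1), (1, 0, 1), (1, 1, 0), (1, 1, 1), (1, 2, 0), (1, 2, 1), (1, 3, 0), (1, 3, 1), (2, 0, 0), (2, 0, 1), (2, 1, 1), (2, 2, 0), (2, 3, 0), (2, 3, 1)]]"

definition inv_Z3 :: "nat \<times> nat \<times> nat \<Rightarrow> nat \<times> nat \<times> nat" where
  "inv_Z3 = (\<lambda>(t, i, e). ((3 - t) mod 3, if e = 0 then (4 - i) mod 4 else i, e))"

lemma chk_Z3_inv: "check_inv Z3_x_D8 cs_Z3_x_D8 inv_Z3"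
  by (simp add: check_inv_def Z3_x_D8_def cs_Z3_x_D8_def inv_Z3_def)

lemma chk_Z3_cnt: "check_cnt Z3_x_D8 cs_Z3_x_D8 inv_Z3 Fl_Z3_x_D8 12"
  unfolding check_cnt_def
  by (simp add: cnt_ok_def dl_def Z3_x_D8_def cs_Z3_x_D8_def Fl_Z3_x_D8_def inv_Z3_def)

lemma chk_Z3_struct: "check_struct cs_Z3_x_D8 Fl_Z3_x_D8 [1, 1, 1, 2, 2, 17] 12"
  by (simp add: check_struct_def cs_Z3_x_D8_def Fl_Z3_x_D8_def)


definition inv_C3 :: "nat \<times> nat \<Rightarrow> nat \<times> nat" where
  "inv_C3 = (\<lambda>(j, i). (if even i then (3 - j) mod 3 else j, (8 - i) mod 8))"

definition inv_SL :: "(int \<times> int) \<times> (int \<times> int) \<Rightarrow> (int \<times> int) \<times> (int \<times> int)" where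
  "inv_SL = (\<lambda>((a, b), (c, d)). ((d, (3 - b) mod 3), ((3 - c) mod 3, a)))"

lemma chk_C3_inv: "check_inv C3_sd_C8 cs_C3_sd_C8 inv_C3"
  by (simp add: check_inv_def C3_sd_C8_def cs_C3_sd_C8_def inv_C3_def)

lemma chk_C3_cnt: "check_cnt C3_sd_C8 cs_C3_sd_C8 inv_C3 Fl_C3_sd_C8 12"
  unfolding check_cnt_def
  by (simp add: cnt_ok_def dl_def C3_sd_C8_def cs_C3_sd_C8_def Fl_C3_sd_C8_def inv_C3_def)

lemma chk_C3_struct: "check_struct cs_C3_sd_C8 Fl_C3_sd_C8 [1, 1, 1, 2, 2, 17] 12"
  by (simp add: check_struct_def cs_C3_sd_C8_def Fl_C3_sd_C8_def)

lemma chk_SL_inv: "check_inv SL23 cs_SL23 inv_SL"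
  by (simp add: check_inv_def SL23_def cs_SL23_def inv_SL_def)

lemma chk_SL_cnt: "check_cnt SL23 cs_SL23 inv_SL Fl_SL23 12"
  unfolding check_cnt_def
  by (simp add: cnt_ok_def dl_def SL23_def cs_SL23_def Fl_SL23_def inv_SL_def)

lemma chk_SL_struct: "check_struct cs_SL23 Fl_SL23 [1, 1, 1, 2, 2, 17] 12"
  by (simp add: check_struct_def cs_SL23_def Fl_SL23_def)

lemma three_nat: "{0..<3::nat} = set [0, 1, 2]" by auto
lemma four_nat: "{0..<4::nat} = set [0, 1, 2, 3]" by auto
lemma two_nat: "{0..<2::nat} = set [0, 1]" by auto
lemma eight_nat: "{0..<8::nat} = set [0, 1, 2, 3, 4, 5, 6, 7]" by auto

lemma car_Z3: "set cs_Z3_x_D8 = carrier Z3_x_D8"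
proof -
  have "cs_Z3_x_D8 = List.product [0, 1, 2] (List.product [0, 1, 2, 3] [0, 1])"
    by (simp add: cs_Z3_x_D8_def)
  note eq = this
  show ?thesis
    unfolding eq set_product Z3_x_D8_def partial_object.simps three_nat four_nat two_nat by (rule refl)
qed

lemma car_C3: "set cs_C3_sd_C8 = carrier C3_sd_C8"
proof -
  have "cs_C3_sd_C8 = List.product [0, 1, 2] [0, 1, 2, 3, 4, 5, 6, 7]"
    by (simp add: cs_C3_sd_C8_def)
  note eq = this
  show ?thesis
    unfolding eq set_product C3_sd_C8_def partial_object.simps three_nat eight_nat by (rule refl)
qed

lemma int3: "((a::int) \<in> {0..2}) = (a = 0 \<or> a = 1 \<or> a = 2)" by auto

lemma car_SL1: "list_all (\<lambda>x. x \<in> carrier SL23) cs_SL23"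
  by (simp add: cs_SL23_def SL23_def)

lemma car_SL2:
  assumes "a = 0 \<or> a = 1 \<or> a = 2" "b = 0 \<or> b = 1 \<or> b = 2"
    "c = 0 \<or> c = 1 \<or> c = 2" "d = 0 \<or> d = 1 \<or> d = 2" "(a * d - b * c) mod 3 = (1::int)"
  shows "((a, b), (c, d)) \<in> set cs_SL23"
  using assms by (elim disjE; simp add: cs_SL23_def)

lemma car_SL: "set cs_SL23 = carrier SL23"
proof (rule Set.set_eqI)
  fix x :: "(int \<times> int) \<times> (int \<times> int)"
  obtain a b c d where x: "x = ((a, b), (c, d))" by (metis prod.collapse)
  show "x \<in> set cs_SL23 \<longleftrightarrow> x \<in> carrier SL23"
  proof
    assume "x \<in> set cs_SL23" then show "x \<in> carrier SL23" using car_SL1 by (simp add: list_all_iff)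
  next
    assume "x \<in> carrier SL23"
    then show "x \<in> set cs_SL23"
      unfolding x SL23_def partial_object.simps mem_Collect_eq case_prod_conv int3
      using car_SL2 by blast
  qed
qed

theorem mainTheorem10:
  shows "(\<exists>F. is_Hadamard_PDF C3_sd_C8 F [1, 1, 1, 2, 2, 17] 12)
       \<and> (\<exists>F. is_Hadamard_PDF SL23 F [1, 1, 1, 2, 2, 17] 12)
       \<and> (\<exists>F. is_Hadamard_PDF Z3_x_D8 F [1, 1, 1, 2, 2, 17] 12)"
proof (intro conjI exI)
  show "is_Hadamard_PDF C3_sd_C8 (map set Fl_C3_sd_C8) [1, 1, 1, 2, 2, 17] 12"
    using car_C3 chk_C3_inv chk_C3_cnt chk_C3_struct by (intro check_sound) (auto simp: check_def)
  show "is_Hadamard_PDF SL23 (map set Fl_SL23) [1, 1, 1, 2, 2, 17] 12"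
    using car_SL chk_SL_inv chk_SL_cnt chk_SL_struct by (intro check_sound) (auto simp: check_def)
  show "is_Hadamard_PDF Z3_x_D8 (map set Fl_Z3_x_D8) [1, 1, 1, 2, 2, 17] 12"
    using car_Z3 chk_Z3_inv chk_Z3_cnt chk_Z3_struct by (intro check_sound) (auto simp: check_def)
qed

end
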